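(* Let $\mathcal{P}$ be a poset and $S\subseteq\mathcal{P}$ a finitely presented convex set. Then $\min S$ and $\operatorname{cover}S$ are finite, and $S=\uparrow\min S\setminus\uparrow\operatorname{cover}S$.
   Context: Fix a field $\mathbb{k}$. $\uparrow X=\{p:\exists x\in X,x\le p\}$; $\operatorname{cover}X=\min(\uparrow X\setminus X)$. $S$ is convex if $s\le p\le s'$ with $s,s'\in S$ implies $p\in S$. $\mathbb{k}_S$ is the indicator representation ($\mathbb{k}$ on $S$, $0$ elsewhere, identity maps within $S$). $S$ is finitely presented if $\mathbb{k}_S$ is the cokernel of a morphism between finite direct sums of representations $\mathbb{k}_{\uparrow\{p\}}$, $p\in\mathcal{P}$. *)

theory Defs
  imports Main
begin

(* Posets are types of class order; the poset P is UNIV :: 'p set. *)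

definition up_set :: "'p::order set \<Rightarrow> 'p set" where
  "up_set X = {p. \<exists>x\<in>X. x \<le> p}"

definition minimal_set :: "'p::order set \<Rightarrow> 'p set" where
  "minimal_set X = {s\<in>X. \<forall>t\<in>X. t \<le> s \<longrightarrow> t = s}"

definition cover_set :: "'p::order set \<Rightarrow> 'p set" where
  "cover_set X = minimal_set (up_set X - X)"

definition convex_set :: "'p::order set \<Rightarrow> bool" where
  "convex_set S \<longleftrightarrow> (\<forall>s\<in>S. \<forall>s'\<in>S. \<forall>p. s \<le> p \<and> p \<le> s' \<longrightarrow> p \<in> S)"

(* The finite direct sum  \<Oplus>_{i<n} k_{\<up>{p i}}  evaluated at the point x:
   realised as the k-vectors (nat \<Rightarrow> 'k) supported on {i < n. p i \<le> x};
   its structure maps (x \<le> y) are the inclusions. *)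
definition free_at :: "(nat \<Rightarrow> 'p::order) \<Rightarrow> nat \<Rightarrow> 'p \<Rightarrow> (nat \<Rightarrow> 'k::field) set" where
  "free_at p n x = {v. \<forall>i. v i \<noteq> 0 \<longrightarrow> i < n \<and> p i \<le> x}"

definition linear_on :: "(nat \<Rightarrow> 'k::field) set \<Rightarrow> ((nat \<Rightarrow> 'k) \<Rightarrow> 'b) \<Rightarrow> ('b \<Rightarrow> 'b \<Rightarrow> 'b) \<Rightarrow> ('k \<Rightarrow> 'b \<Rightarrow> 'b) \<Rightarrow> bool" where
  "linear_on V g ad sc \<longleftrightarrow>
     (\<forall>u\<in>V. \<forall>v\<in>V. g (\<lambda>i. u i + v i) = ad (g u) (g v)) \<and>
     (\<forall>u\<in>V. \<forall>c. g (\<lambda>i. c * u i) = sc c (g u))"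

(* A morphism of representations  \<Oplus>_{j<m} k_{\<up>{q j}} \<rightarrow> \<Oplus>_{i<n} k_{\<up>{p i}}:
   a family of linear maps f x, natural w.r.t. the structure maps (inclusions). *)
definition free_morphism ::
  "(nat \<Rightarrow> 'p::order) \<Rightarrow> nat \<Rightarrow> (nat \<Rightarrow> 'p) \<Rightarrow> nat \<Rightarrow> ('p \<Rightarrow> (nat \<Rightarrow> 'k::field) \<Rightarrow> (nat \<Rightarrow> 'k)) \<Rightarrow> bool" where
  "free_morphism q m p n f \<longleftrightarrow>
     (\<forall>x. (\<forall>v\<in>free_at q m x. f x v \<in> free_at p n x) \<and>
          linear_on (free_at q m x) (f x) (\<lambda>w w' i. w i + w' i) (\<lambda>c w i. c * w i)) \<and>
     (\<forall>x y v. x \<le> y \<longrightarrow> v \<in> free_at q m x \<longrightarrow> f y v = f x v)"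

(* Structure map k_S(x \<le> y) of the indicator representation k_S (k on S, 0 elsewhere). *)
definition ind_map :: "'p set \<Rightarrow> 'p \<Rightarrow> 'p \<Rightarrow> 'k::field \<Rightarrow> 'k" where
  "ind_map S x y c = (if x \<in> S \<and> y \<in> S then c else 0)"

(* k_S is the cokernel of f : \<Oplus>_{j<m} k_{\<up>{q j}} \<rightarrow> \<Oplus>_{i<n} k_{\<up>{p i}}:
   there is a morphism \<psi> from the codomain to k_S which is pointwise surjective
   and whose pointwise kernel is the pointwise image of f
   (i.e. F \<rightarrow> G \<rightarrow> k_S \<rightarrow> 0 is exact, so coker f \<cong> k_S). *)
definition cokernel_is_indicator ::
  "(nat \<Rightarrow> 'p::order) \<Rightarrow> nat \<Rightarrow> (nat \<Rightarrow> 'p) \<Rightarrow> nat \<Rightarrow> ('p \<Rightarrow> (nat \<Rightarrow> 'k::field) \<Rightarrow> (nat \<Rightarrow> 'k)) \<Rightarrow> 'p set \<Rightarrow> bool" where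
  "cokernel_is_indicator q m p n f S \<longleftrightarrow>
     (\<exists>\<psi> :: 'p \<Rightarrow> (nat \<Rightarrow> 'k) \<Rightarrow> 'k.
        (\<forall>x. linear_on (free_at p n x) (\<psi> x) (+) (*)) \<and>
        (\<forall>x. x \<notin> S \<longrightarrow> (\<forall>v\<in>free_at p n x. \<psi> x v = 0)) \<and>
        (\<forall>x y v. x \<le> y \<longrightarrow> v \<in> free_at p n x \<longrightarrow> \<psi> y v = ind_map S x y (\<psi> x v)) \<and>
        (\<forall>x. x \<in> S \<longrightarrow> (\<forall>c. \<exists>v\<in>free_at p n x. \<psi> x v = c)) \<and>
        (\<forall>x. {v\<in>free_at p n x. \<psi> x v = 0} = f x ` free_at q m x))"

definition finitely_presented :: "'k::field itself \<Rightarrow> 'p::order set \<Rightarrow> bool" where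
  "finitely_presented _ S \<longleftrightarrow>
     (\<exists>(q :: nat \<Rightarrow> 'p) m (p :: nat \<Rightarrow> 'p) n (f :: 'p \<Rightarrow> (nat \<Rightarrow> 'k) \<Rightarrow> (nat \<Rightarrow> 'k)).
        free_morphism q m p n f \<and> cokernel_is_indicator q m p n f S)"

end

theory Submission
  imports Defs
begin

definition unitv :: "nat \<Rightarrow> nat \<Rightarrow> 'k::field" where
  "unitv i = (\<lambda>j. if j = i then 1 else 0)"

lemma unitv_in: "i < n \<Longrightarrow> p i \<le> x \<Longrightarrow> unitv i \<in> free_at p n x"
  by (auto simp: unitv_def free_at_def)

lemma zero_in: "(\<lambda>i. 0) \<in> free_at p n x"
  by (auto simp: free_at_def)

lemma lin_zero:
  assumes "linear_on (free_at p n x) (g :: (nat \<Rightarrow> 'k::field) \<Rightarrow> 'k) (+) (*)"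
  shows "g (\<lambda>i. 0) = 0"
proof -
  have "\<forall>c. g (\<lambda>i. c * (\<lambda>i. 0::'k) i) = c * g (\<lambda>i. 0)"
    using assms zero_in[of p n x] unfolding linear_on_def by (elim conjE) (erule bspec)
  from spec[OF this, of 0] show ?thesis by simp
qed

lemma decomp_aux:
  assumes lin: "linear_on (free_at p n x) (g :: (nat \<Rightarrow> 'k::field) \<Rightarrow> 'k) (+) (*)"
  shows "\<forall>u\<in>free_at p n x. (\<forall>i\<ge>k. u i = 0) \<longrightarrow> g u = (\<Sum>i<k. u i * g (unitv i))"
proof (induction k)
  case 0
  show ?case
  proof (intro ballI impI)
    fix u :: "nat \<Rightarrow> 'k" assume "u \<in> free_at p n x" "\<forall>i\<ge>0. u i = 0"
    then have "u = (\<lambda>i. 0)" by auto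
    then show "g u = (\<Sum>i<0. u i * g (unitv i))" using lin_zero[OF lin] by simp
  qed
next
  case (Suc k)
  show ?case
  proof (intro ballI impI)
    fix u :: "nat \<Rightarrow> 'k" assume u: "u \<in> free_at p n x" and s: "\<forall>i\<ge>Suc k. u i = 0"
    define u' where "u' = u(k := 0)"
    have u'in: "u' \<in> free_at p n x" using u by (auto simp: u'_def free_at_def)
    have u's: "\<forall>i\<ge>k. u' i = 0" using s by (auto simp: u'_def)
    have IH: "g u' = (\<Sum>i<k. u' i * g (unitv i))" using Suc u'in u's by blast
    have sumeq: "(\<Sum>i<k. u' i * g (unitv i)) = (\<Sum>i<k. u i * g (unitv i))"
      by (rule sum.cong) (auto simp: u'_def)
    show "g u = (\<Sum>i<Suc k. u i * g (unitv i))"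
    proof (cases "u k = 0")
      case True
      then have "u = u'" by (auto simp: u'_def)
      then have "g u = g u'" by (simp only:)
      also have "\<dots> = (\<Sum>i<k. u i * g (unitv i))" using IH sumeq by (rule trans)
      finally have "g u = (\<Sum>i<k. u i * g (unitv i))" .
      then show ?thesis using True by (simp only: sum.lessThan_Suc) simp
    next
      case False
      then have kin: "k < n" "p k \<le> x" using u by (auto simp: free_at_def)
      have ein: "unitv k \<in> free_at p n x" using unitv_in kin by blast
      define d where "d = (\<lambda>i. u k * unitv k i)"
      have din: "d \<in> free_at p n x" using kin by (auto simp: d_def unitv_def free_at_def)
      have ud: "u = (\<lambda>i. u' i + d i)" by (auto simp: u'_def d_def unitv_def)
      have "\<forall>u\<in>free_at p n x. \<forall>v\<in>free_at p n x. g (\<lambda>i. u i + v i) = g u + g v"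
        using lin unfolding linear_on_def by (elim conjE)
      then have "g (\<lambda>i. u' i + d i) = g u' + g d" using u'in din by (elim ballE) auto
      then have gu: "g u = g u' + g d" using ud by (simp only:)
      have "\<forall>c. g (\<lambda>i. c * unitv k i) = c * g (unitv k)"
        using lin ein unfolding linear_on_def by (elim conjE) (erule bspec)
      then have "g (\<lambda>i. u k * unitv k i) = u k * g (unitv k)" by (rule spec)
      then have "g d = u k * g (unitv k)" unfolding d_def .
      with gu have "g u = (\<Sum>i<k. u i * g (unitv i)) + u k * g (unitv k)" using IH sumeq by (simp only:)
      then show ?thesis by (simp only: sum.lessThan_Suc)
    qed
  qed
qed

lemma decomp:
  assumes lin: "linear_on (free_at p n x) (g :: (nat \<Rightarrow> 'k::field) \<Rightarrow> 'k) (+) (*)"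
    and u: "u \<in> free_at p n x"
  shows "g u = (\<Sum>i<n. u i * g (unitv i))"
proof -
  have "\<forall>i\<ge>n. u i = 0" using u by (auto simp: free_at_def)
  then show ?thesis using decomp_aux[OF lin] u by blast
qed

lemma min_finite:
  fixes B Q :: "'p::order set"
  assumes "finite Q" "Q \<subseteq> B" "\<forall>x\<in>B. \<exists>c\<in>Q. c \<le> x"
  shows "minimal_set B \<subseteq> Q" and "\<forall>x\<in>B. \<exists>c\<in>minimal_set B. c \<le> x"
proof -
  show "minimal_set B \<subseteq> Q"
  proof
    fix b assume b: "b \<in> minimal_set B"
    then obtain c where "c \<in> Q" "c \<le> b" using assms unfolding minimal_set_def by blast
    then show "b \<in> Q" using b assms(2) unfolding minimal_set_def by blast
  qed
  show "\<forall>x\<in>B. \<exists>c\<in>minimal_set B. c \<le> x"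
  proof
    fix x assume x: "x \<in> B"
    then obtain c0 where c0: "c0 \<in> Q" "c0 \<le> x" using assms by blast
    have fin: "finite {c\<in>Q. c \<le> x}" using assms(1) by simp
    obtain c where c: "c \<in> {c\<in>Q. c \<le> x}" "\<forall>d\<in>{c\<in>Q. c \<le> x}. d \<le> c \<longrightarrow> c = d"
      using finite_has_minimal[OF fin] c0 by blast
    have "c \<in> minimal_set B"
      unfolding minimal_set_def
    proof (intro CollectI conjI ballI impI)
      show "c \<in> B" using c assms(2) by blast
      fix t assume t: "t \<in> B" "t \<le> c"
      then obtain d where d: "d \<in> Q" "d \<le> t" using assms by blast
      then have "d \<le> c" "d \<le> x" using t c by auto
      then have "c = d" using c d by blast
      then show "t = c" using t d by simp
    qed
    then show "\<exists>c\<in>minimal_set B. c \<le> x" using c by blast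
  qed
qed


lemma free_mono: "x \<le> y \<Longrightarrow> free_at p n x \<subseteq> free_at p n y"
  by (auto simp: free_at_def intro: order_trans)

lemma keyM:
  fixes S :: "'p::order set" and \<psi> :: "'p \<Rightarrow> (nat \<Rightarrow> 'k::field) \<Rightarrow> 'k"
  assumes lin: "\<forall>x. linear_on (free_at p n x) (\<psi> x) (+) (*)"
    and nat: "\<forall>x y v. x \<le> y \<longrightarrow> v \<in> free_at p n x \<longrightarrow> \<psi> y v = ind_map S x y (\<psi> x v)"
    and surj: "\<forall>x. x \<in> S \<longrightarrow> (\<forall>c. \<exists>v\<in>free_at p n x. \<psi> x v = c)"
  shows "\<forall>s\<in>S. \<exists>i<n. p i \<le> s \<and> p i \<in> S"
proof
  fix s assume s: "s \<in> S"
  obtain v where v: "v \<in> free_at p n s" "\<psi> s v = 1" using surj s by blast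
  have "\<psi> s v = (\<Sum>i<n. v i * \<psi> s (unitv i))" using decomp lin v(1) by blast
  then have "(\<Sum>i<n. v i * \<psi> s (unitv i)) \<noteq> 0" using v(2) by simp
  then obtain i where i: "i \<in> {..<n}" "v i * \<psi> s (unitv i) \<noteq> 0"
    using sum.not_neutral_contains_not_neutral by blast
  then have vi: "v i \<noteq> 0" "\<psi> s (unitv i) \<noteq> 0" by auto
  then have pi: "p i \<le> s" using v(1) by (auto simp: free_at_def)
  have "unitv i \<in> free_at p n (p i)" using unitv_in i by auto
  then have "\<psi> s (unitv i) = ind_map S (p i) s (\<psi> (p i) (unitv i))" using nat pi by blast
  then have "p i \<in> S" using vi(2) by (auto simp: ind_map_def split: if_splits)
  then show "\<exists>i<n. p i \<le> s \<and> p i \<in> S" using i pi by auto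
qed

lemma keyK:
  fixes S :: "'p::order set" and \<psi> :: "'p \<Rightarrow> (nat \<Rightarrow> 'k::field) \<Rightarrow> 'k"
  assumes fm: "free_morphism q m p n f"
    and lin: "\<forall>x. linear_on (free_at p n x) (\<psi> x) (+) (*)"
    and nat: "\<forall>x y v. x \<le> y \<longrightarrow> v \<in> free_at p n x \<longrightarrow> \<psi> y v = ind_map S x y (\<psi> x v)"
    and surj: "\<forall>x. x \<in> S \<longrightarrow> (\<forall>c. \<exists>v\<in>free_at p n x. \<psi> x v = c)"
    and ker: "\<forall>x. {v\<in>free_at p n x. \<psi> x v = 0} = f x ` free_at q m x"
  shows "\<forall>x \<in> up_set S - S. \<exists>j<m. q j \<le> x \<and> q j \<in> up_set S - S"
proof
  fix x assume x: "x \<in> up_set S - S"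
  show "\<exists>j<m. q j \<le> x \<and> q j \<in> up_set S - S"
  proof (rule ccontr)
    assume "\<not> (\<exists>j<m. q j \<le> x \<and> q j \<in> up_set S - S)"
    then have H: "\<forall>j<m. q j \<le> x \<longrightarrow> q j \<notin> up_set S - S" by blast
    obtain s where s: "s \<in> S" "s \<le> x" using x by (auto simp: up_set_def)
    obtain v where v: "v \<in> free_at p n s" "\<psi> s v = 1" using surj s by blast
    have vx: "v \<in> free_at p n x" using free_mono s(2) v(1) by blast
    have "\<psi> x v = ind_map S s x (\<psi> s v)" using nat s(2) v(1) by blast
    then have "\<psi> x v = 0" using x by (simp add: ind_map_def)
    then have "v \<in> f x ` free_at q m x" using ker vx by blast
    then obtain w where w: "w \<in> free_at q m x" "v = f x w" by blast
    define LAM where "LAM = (\<lambda>u::nat \<Rightarrow> 'k. \<Sum>i<n. if p i \<in> S \<and> p i \<le> x then u i * \<psi> (p i) (unitv i) else 0)"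
    have L1: "LAM u = \<psi> y u" if y: "y \<in> S" "y \<le> x" "u \<in> free_at p n y" for y u
    proof -
      have "\<psi> y u = (\<Sum>i<n. u i * \<psi> y (unitv i))" using decomp lin y(3) by blast
      also have "\<dots> = LAM u" unfolding LAM_def
      proof (rule sum.cong)
        fix i assume i: "i \<in> {..<n}"
        show "u i * \<psi> y (unitv i) = (if p i \<in> S \<and> p i \<le> x then u i * \<psi> (p i) (unitv i) else 0)"
        proof (cases "u i = 0")
          case True then show ?thesis by simp
        next
          case False
          then have pi: "p i \<le> y" using y(3) by (auto simp: free_at_def)
          have "unitv i \<in> free_at p n (p i)" using unitv_in i by auto
          then have "\<psi> y (unitv i) = ind_map S (p i) y (\<psi> (p i) (unitv i))" using nat pi by blast
          then show ?thesis using pi y by (auto simp: ind_map_def intro: order_trans)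
        qed
      qed simp
      finally show ?thesis by simp
    qed
    have L2: "LAM u = 0" if y: "y \<notin> up_set S" "u \<in> free_at p n y" for y u
      unfolding LAM_def
    proof (rule sum.neutral, rule ballI)
      fix i assume i: "i \<in> {..<n}"
      show "(if p i \<in> S \<and> p i \<le> x then u i * \<psi> (p i) (unitv i) else 0) = 0"
      proof (cases "u i = 0")
        case True then show ?thesis by simp
      next
        case False
        then have pi: "p i \<le> y" using y(2) by (auto simp: free_at_def)
        then have "p i \<notin> S" using y(1) by (auto simp: up_set_def)
        then show ?thesis by simp
      qed
    qed
    have fx: "\<forall>v\<in>free_at q m x. f x v \<in> free_at p n x"
      and flin: "linear_on (free_at q m x) (f x) (\<lambda>w w' i. w i + w' i) (\<lambda>c w i. c * w i)"
      using fm unfolding free_morphism_def by blast+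
    have ladd: "LAM (\<lambda>i. a i + b i) = LAM a + LAM b" for a b
      unfolding LAM_def by (simp add: sum.distrib[symmetric] distrib_right if_distrib cong: if_cong)
    have lsc: "LAM (\<lambda>i. c * a i) = c * LAM a" for a c
      unfolding LAM_def by (simp add: sum_distrib_left mult.assoc if_distrib cong: if_cong)
    have lin2: "linear_on (free_at q m x) (\<lambda>w. LAM (f x w)) (+) (*)"
      using flin unfolding linear_on_def by (simp add: ladd lsc)
    have "LAM v = 1" using L1[OF s v(1)] v(2) by simp
    moreover have "LAM v = (\<Sum>j<m. w j * LAM (f x (unitv j)))"
      using decomp[OF lin2 w(1)] w(2) by simp
    moreover have "(\<Sum>j<m. w j * LAM (f x (unitv j))) = 0"
    proof (rule sum.neutral, rule ballI)
      fix j assume j: "j \<in> {..<m}"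
      show "w j * LAM (f x (unitv j)) = 0"
      proof (cases "w j = 0")
        case True then show ?thesis by simp
      next
        case False
        then have qj: "q j \<le> x" using w(1) by (auto simp: free_at_def)
        have ej: "unitv j \<in> free_at q m (q j)" using unitv_in j by auto
        have eq: "f x (unitv j) = f (q j) (unitv j)" using fm qj ej unfolding free_morphism_def by blast
        have gin: "f (q j) (unitv j) \<in> f (q j) ` free_at q m (q j)" using ej by blast
        then have g: "f (q j) (unitv j) \<in> free_at p n (q j)" "\<psi> (q j) (f (q j) (unitv j)) = 0"
          using ker[rule_format, of "q j"] by blast+
        have "LAM (f (q j) (unitv j)) = 0"
        proof (cases "q j \<in> S")
          case True
          then show ?thesis using L1[OF True qj g(1)] g(2) by simp
        next
          case False
          then have "q j \<notin> up_set S" using H j qj by auto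
          then show ?thesis using L2 g(1) by blast
        qed
        then show ?thesis using eq by simp
      qed
    qed
    ultimately show False by simp
  qed
qed


theorem mainTheorem17:
  fixes S :: "'p::order set"
  assumes "finitely_presented TYPE('k::field) S"
    and "convex_set S"
  shows "finite (minimal_set S) \<and> finite (cover_set S)
         \<and> S = up_set (minimal_set S) - up_set (cover_set S)"
proof -
  obtain q m p n and f :: "'p \<Rightarrow> (nat \<Rightarrow> 'k) \<Rightarrow> (nat \<Rightarrow> 'k)" where
    fm: "free_morphism q m p n f" and ck: "cokernel_is_indicator q m p n f S"
    using assms(1) unfolding finitely_presented_def by (elim exE conjE) (rule that)
  obtain \<psi> :: "'p \<Rightarrow> (nat \<Rightarrow> 'k) \<Rightarrow> 'k" where
    lin: "\<forall>x. linear_on (free_at p n x) (\<psi> x) (+) (*)"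
    and nat: "\<forall>x y v. x \<le> y \<longrightarrow> v \<in> free_at p n x \<longrightarrow> \<psi> y v = ind_map S x y (\<psi> x v)"
    and surj: "\<forall>x. x \<in> S \<longrightarrow> (\<forall>c. \<exists>v\<in>free_at p n x. \<psi> x v = c)"
    and ker: "\<forall>x. {v\<in>free_at p n x. \<psi> x v = 0} = f x ` free_at q m x"
    using ck unfolding cokernel_is_indicator_def by (elim exE conjE) (rule that)
  have M: "\<forall>s\<in>S. \<exists>i<n. p i \<le> s \<and> p i \<in> S" using keyM[OF lin nat surj] .
  have K: "\<forall>x \<in> up_set S - S. \<exists>j<m. q j \<le> x \<and> q j \<in> up_set S - S"
    using keyK[OF fm lin nat surj ker] .
  define QM where "QM = p ` {i. i < n \<and> p i \<in> S}"
  define QC where "QC = q ` {j. j < m \<and> q j \<in> up_set S - S}"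
  have QM: "finite QM" "QM \<subseteq> S" "\<forall>x\<in>S. \<exists>c\<in>QM. c \<le> x"
    unfolding QM_def using M by auto
  have QC: "finite QC" "QC \<subseteq> up_set S - S" "\<forall>x\<in>up_set S - S. \<exists>c\<in>QC. c \<le> x"
    unfolding QC_def using K by auto
  note m1 = min_finite[OF QM] and m2 = min_finite[OF QC]
  have f1: "finite (minimal_set S)" using m1(1) QM(1) finite_subset by blast
  have f2: "finite (cover_set S)" unfolding cover_set_def using m2(1) QC(1) finite_subset by blast
  have minS: "minimal_set S \<subseteq> S" by (auto simp: minimal_set_def)
  have covS: "cover_set S \<subseteq> up_set S - S" by (auto simp: cover_set_def minimal_set_def)
  have eq: "S = up_set (minimal_set S) - up_set (cover_set S)"
  proof
    show "S \<subseteq> up_set (minimal_set S) - up_set (cover_set S)"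
    proof
      fix s assume s: "s \<in> S"
      have "s \<in> up_set (minimal_set S)" using m1(2) s by (auto simp: up_set_def)
      moreover have "s \<notin> up_set (cover_set S)"
      proof
        assume "s \<in> up_set (cover_set S)"
        then obtain c where c: "c \<in> cover_set S" "c \<le> s" by (auto simp: up_set_def)
        then have "c \<in> up_set S - S" using covS by blast
        then obtain s' where "s' \<in> S" "s' \<le> c" "c \<notin> S" by (auto simp: up_set_def)
        then show False using assms(2) s c(2) unfolding convex_set_def by blast
      qed
      ultimately show "s \<in> up_set (minimal_set S) - up_set (cover_set S)" by blast
    qed
  next
    show "up_set (minimal_set S) - up_set (cover_set S) \<subseteq> S"
    proof
      fix x assume x: "x \<in> up_set (minimal_set S) - up_set (cover_set S)"
      show "x \<in> S"
      proof (rule ccontr)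
        assume nx: "x \<notin> S"
        have "x \<in> up_set S" using x minS by (auto simp: up_set_def)
        then have "x \<in> up_set S - S" using nx by blast
        then obtain c where "c \<in> cover_set S" "c \<le> x" using m2(2) unfolding cover_set_def by blast
        then show False using x by (auto simp: up_set_def)
      qed
    qed
  qed
  show ?thesis using f1 f2 eq by blast
qed

end
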